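(* Let $n\geq1$ and $\sigma\in\mathfrak{S}_n$. For every packed word $f$ with $\mathrm{Std}(f)=\sigma$ one has $M(f)\subseteq M(\sigma)$, and the map $$\phi_\sigma:\{f\text{ packed word}\mid\mathrm{Std}(f)=\sigma\}\longrightarrow\{I\mid I\subseteq M(\sigma)\},\qquad f\longmapsto M(f),$$ is bijective.
   Context: $[n]=\{1,\ldots,n\}$. A packed word of length $n$ is a word $f=f(1)\ldots f(n)$ of positive integers with $\{f(1),\ldots,f(n)\}=[\max f]$; $\mathfrak{S}_n$ is the set of permutations of $[n]$, viewed as packed words $\sigma(1)\ldots\sigma(n)$. The standardization $\mathrm{Std}(f)$ of a packed word $f$ of length $n$ is the unique $\sigma\in\mathfrak{S}_n$ such that for all $i,j$: $f(i)<f(j)\Rightarrow\sigma(i)<\sigma(j)$, and ($f(i)=f(j)$ and $i<j$) $\Rightarrow\sigma(i)<\sigma(j)$. For a packed word $f$ of length $n$, $M(f)$ is the set of $i\in[n]$ such that: $f(i)<\max f$; for all $j\in[n]$, $f(j)=f(i)\Rightarrow j\leq i$; and for all $j\in[n]$, $f(j)=f(i)+1\Rightarrow j>i$. *)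

theory Defs
  imports Main
begin

text \<open>Words are lists of positive integers; position i (1-based) of f is f ! (i - 1).\<close>

definition at :: "nat list \<Rightarrow> nat \<Rightarrow> nat" where
  "at f i = f ! (i - 1)"

definition packed_word :: "nat list \<Rightarrow> bool" where
  "packed_word f \<longleftrightarrow> set f = {1..Max (set f)} \<and> f \<noteq> []"

definition is_perm :: "nat \<Rightarrow> nat list \<Rightarrow> bool" where
  "is_perm n \<sigma> \<longleftrightarrow> length \<sigma> = n \<and> set \<sigma> = {1..n}"

definition Std :: "nat list \<Rightarrow> nat list" where
  "Std f = (THE \<sigma>. is_perm (length f) \<sigma> \<and>
     (\<forall>i\<in>{1..length f}. \<forall>j\<in>{1..length f}.
        (at f i < at f j \<longrightarrow> at \<sigma> i < at \<sigma> j) \<and>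
        (at f i = at f j \<and> i < j \<longrightarrow> at \<sigma> i < at \<sigma> j)))"

definition M :: "nat list \<Rightarrow> nat set" where
  "M f = {i\<in>{1..length f}. at f i < Max (set f) \<and>
     (\<forall>j\<in>{1..length f}. at f j = at f i \<longrightarrow> j \<le> i) \<and>
     (\<forall>j\<in>{1..length f}. at f j = at f i + 1 \<longrightarrow> j > i)}"

end

theory Submission imports Defs begin

definition C :: "nat list \<Rightarrow> nat list \<Rightarrow> bool" where
  "C f \<sigma> \<longleftrightarrow> (\<forall>i\<in>{1..length f}. \<forall>j\<in>{1..length f}.
        (at f i < at f j \<longrightarrow> at \<sigma> i < at \<sigma> j) \<and>
        (at f i = at f j \<and> i < j \<longrightarrow> at \<sigma> i < at \<sigma> j))"

lemma Std_C: "Std f = (THE \<sigma>. is_perm (length f) \<sigma> \<and> C f \<sigma>)"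
  unfolding Std_def C_def by simp

lemma set_at: "set xs = at xs ` {1..length xs}"
proof
  show "set xs \<subseteq> at xs ` {1..length xs}"
  proof
    fix x assume "x \<in> set xs"
    then obtain k where k: "k < length xs" "xs ! k = x" by (auto simp: in_set_conv_nth)
    hence "at xs (Suc k) = x" by (simp add: at_def)
    thus "x \<in> at xs ` {1..length xs}" using k by force
  qed
  show "at xs ` {1..length xs} \<subseteq> set xs" by (auto simp: at_def)
qed

lemma at_in_set: "i \<in> {1..length xs} \<Longrightarrow> at xs i \<in> set xs"
  using set_at by blast

lemma rank_perm:
  fixes g :: "nat \<Rightarrow> nat"
  assumes inj: "inj_on g {1..n}"
  shows "\<exists>\<tau>. is_perm n \<tau> \<and> (\<forall>i\<in>{1..n}. \<forall>j\<in>{1..n}. g i < g j \<longrightarrow> at \<tau> i < at \<tau> j)"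
proof -
  define r where "r i = Suc (card {j\<in>{1..n}. g j < g i})" for i
  define \<tau> where "\<tau> = map r [1..<n+1]"
  have at\<tau>: "at \<tau> i = r i" if "i \<in> {1..n}" for i
    using that by (auto simp: \<tau>_def at_def nth_upt simp del: upt_Suc)
  have lt: "r i < r j" if "i \<in> {1..n}" "j \<in> {1..n}" "g i < g j" for i j
  proof -
    have "{k\<in>{1..n}. g k < g i} \<subset> {k\<in>{1..n}. g k < g j}"
      using that by auto
    hence "card {k\<in>{1..n}. g k < g i} < card {k\<in>{1..n}. g k < g j}"
      by (intro psubset_card_mono) auto
    thus ?thesis by (simp add: r_def)
  qed
  have injr: "inj_on r {1..n}"
  proof (rule inj_onI)
    fix i j assume ij: "i \<in> {1..n}" "j \<in> {1..n}" "r i = r j"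
    show "i = j"
    proof (rule ccontr)
      assume "i \<noteq> j"
      hence "g i \<noteq> g j" using inj ij by (meson inj_on_def)
      hence "g i < g j \<or> g j < g i" by arith
      thus False using lt[of i j] lt[of j i] ij by auto
    qed
  qed
  have rng: "r i \<in> {1..n}" if "i \<in> {1..n}" for i
  proof -
    have "{k\<in>{1..n}. g k < g i} \<subseteq> {1..n} - {i}" by auto
    hence "card {k\<in>{1..n}. g k < g i} \<le> card ({1..n} - {i})" by (intro card_mono) auto
    also have "\<dots> = n - 1" using that by simp
    finally show ?thesis using that by (auto simp: r_def)
  qed
  have "set \<tau> = r ` {1..n}" by (auto simp: \<tau>_def)
  also have "\<dots> = {1..n}"
  proof (rule card_subset_eq)
    show "r ` {1..n} \<subseteq> {1..n}" using rng by auto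
    show "card (r ` {1..n}) = card {1..n}" using injr by (simp add: card_image)
  qed simp
  finally have "is_perm n \<tau>" by (simp add: is_perm_def \<tau>_def)
  thus ?thesis using lt at\<tau> by metis
qed

lemma key_lt:
  fixes F :: "nat \<Rightarrow> nat"
  assumes "F i < F j" "i \<le> n"
  shows "F i * (n+1) + i < F j * (n+1) + j"
proof -
  have "F i * (n+1) + i < F i * (n+1) + (n+1)" using assms by simp
  also have "\<dots> = (F i + 1) * (n+1)" by simp
  also have "\<dots> \<le> F j * (n+1)" using assms by (intro mult_le_mono1) simp
  finally show ?thesis by simp
qed

lemma std_exists: "\<exists>\<tau>. is_perm (length f) \<tau> \<and> C f \<tau>"
proof -
  define n where "n = length f"
  define g where "g i = at f i * (n+1) + i" for i
  have gl: "g i < g j" if "i \<in> {1..n}" "j \<in> {1..n}" "at f i < at f j \<or> (at f i = at f j \<and> i < j)" for i j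
    using that key_lt[of "at f" i j n] by (auto simp: g_def)
  have "inj_on g {1..n}"
  proof (rule inj_onI)
    fix i j assume ij: "i \<in> {1..n}" "j \<in> {1..n}" "g i = g j"
    show "i = j"
    proof (rule ccontr)
      assume "i \<noteq> j"
      hence "at f i < at f j \<or> (at f i = at f j \<and> i < j) \<or> at f j < at f i \<or> (at f j = at f i \<and> j < i)"
        by arith
      thus False using gl[of i j] gl[of j i] ij by auto
    qed
  qed
  from rank_perm[OF this] obtain \<tau> where "is_perm n \<tau>"
    "\<forall>i\<in>{1..n}. \<forall>j\<in>{1..n}. g i < g j \<longrightarrow> at \<tau> i < at \<tau> j" by blast
  thus ?thesis using gl unfolding C_def n_def[symmetric] by blast
qed

lemma std_unique_aux:
  assumes "is_perm n \<sigma>" "i \<in> {1..n}"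
  shows "at \<sigma> i = Suc (card {j\<in>{1..n}. at \<sigma> j < at \<sigma> i})"
proof -
  have len: "length \<sigma> = n" and st: "set \<sigma> = {1..n}" using assms by (auto simp: is_perm_def)
  have "distinct \<sigma>" using len st by (intro card_distinct) simp
  hence inj: "inj_on (at \<sigma>) {1..n}"
    unfolding inj_on_def at_def using len by (auto simp: nth_eq_iff_index_eq)
  have im: "at \<sigma> ` {1..n} = {1..n}" using set_at[of \<sigma>] len st by simp
  have "at \<sigma> ` {j\<in>{1..n}. at \<sigma> j < at \<sigma> i} = {v\<in>{1..n}. v < at \<sigma> i}"
  proof
    show "at \<sigma> ` {j\<in>{1..n}. at \<sigma> j < at \<sigma> i} \<subseteq> {v\<in>{1..n}. v < at \<sigma> i}"
      using im by blast
    show "{v\<in>{1..n}. v < at \<sigma> i} \<subseteq> at \<sigma> ` {j\<in>{1..n}. at \<sigma> j < at \<sigma> i}"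
    proof
      fix v assume v: "v \<in> {v\<in>{1..n}. v < at \<sigma> i}"
      then obtain j where "j \<in> {1..n}" "at \<sigma> j = v" using im by (metis (no_types, lifting) imageE mem_Collect_eq)
      thus "v \<in> at \<sigma> ` {j\<in>{1..n}. at \<sigma> j < at \<sigma> i}" using v by blast
    qed
  qed
  also have "\<dots> = {1..<at \<sigma> i}"
  proof -
    have "at \<sigma> i \<in> {1..n}" using im assms(2) by blast
    thus ?thesis by auto
  qed
  finally have "card {j\<in>{1..n}. at \<sigma> j < at \<sigma> i} = card {1..<at \<sigma> i}"
    using card_image[OF inj_on_subset[OF inj, of "{j\<in>{1..n}. at \<sigma> j < at \<sigma> i}"]] by (metis (no_types, lifting) mem_Collect_eq subsetI)
  moreover have "at \<sigma> i \<ge> 1" using im assms(2) by auto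
  ultimately show ?thesis by simp
qed

lemma C_iff:
  assumes "C f \<sigma>" "i \<in> {1..length f}" "j \<in> {1..length f}"
  shows "at \<sigma> j < at \<sigma> i \<longleftrightarrow> (at f j < at f i \<or> (at f j = at f i \<and> j < i))"
proof -
  have "at f i < at f j \<or> (at f i = at f j \<and> i < j) \<or> i = j \<or> (at f j < at f i \<or> (at f j = at f i \<and> j < i))"
    by arith
  thus ?thesis using assms unfolding C_def by (metis less_not_sym order.irrefl)
qed

lemma std_unique:
  assumes "is_perm (length f) \<sigma>" "C f \<sigma>" "is_perm (length f) \<tau>" "C f \<tau>"
  shows "\<sigma> = \<tau>"
proof -
  have eq: "at \<sigma> i = at \<tau> i" if "i \<in> {1..length f}" for i
  proof -
    have "{j\<in>{1..length f}. at \<sigma> j < at \<sigma> i} = {j\<in>{1..length f}. at \<tau> j < at \<tau> i}"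
      using C_iff[OF assms(2) that] C_iff[OF assms(4) that] by auto
    thus ?thesis using std_unique_aux[OF assms(1) that] std_unique_aux[OF assms(3) that] by simp
  qed
  have "length \<sigma> = length f" "length \<tau> = length f" using assms by (auto simp: is_perm_def)
  thus ?thesis
  proof (intro nth_equalityI)
    fix k assume "k < length \<sigma>"
    thus "\<sigma> ! k = \<tau> ! k" using eq[of "Suc k"] \<open>length \<sigma> = length f\<close> by (simp add: at_def)
  qed simp
qed

lemma Std_props: "is_perm (length f) (Std f) \<and> C f (Std f)"
proof -
  have "\<exists>!\<tau>. is_perm (length f) \<tau> \<and> C f \<tau>" using std_exists std_unique by blast
  from theI'[OF this] show ?thesis unfolding Std_C .
qed

locale P =
  fixes n :: nat and \<sigma> :: "nat list"
  assumes n1: "n \<ge> 1" and perm: "is_perm n \<sigma>"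
begin

lemma len: "length \<sigma> = n" and set\<sigma>: "set \<sigma> = {1..n}"
  using perm by (auto simp: is_perm_def)

lemma im\<sigma>: "at \<sigma> ` {1..n} = {1..n}" using set_at[of \<sigma>] len set\<sigma> by simp

lemma atr: "i \<in> {1..n} \<Longrightarrow> at \<sigma> i \<in> {1..n}" using im\<sigma> by blast

lemma ainj: "i \<in> {1..n} \<Longrightarrow> j \<in> {1..n} \<Longrightarrow> at \<sigma> i = at \<sigma> j \<Longrightarrow> i = j"
proof -
  have "distinct \<sigma>" using len set\<sigma> by (intro card_distinct) simp
  thus "i \<in> {1..n} \<Longrightarrow> j \<in> {1..n} \<Longrightarrow> at \<sigma> i = at \<sigma> j \<Longrightarrow> i = j"
    unfolding at_def using len by (auto simp: nth_eq_iff_index_eq)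
qed

lemma asurj: "v \<in> {1..n} \<Longrightarrow> \<exists>i\<in>{1..n}. at \<sigma> i = v" using im\<sigma> by (metis imageE)

lemma max\<sigma>: "Max (set \<sigma>) = n" unfolding set\<sigma> using n1 by (intro Max_eqI) auto

lemma M\<sigma>: "j \<in> M \<sigma> \<longleftrightarrow> j \<in> {1..n} \<and> at \<sigma> j < n \<and> (\<forall>i\<in>{1..n}. at \<sigma> i = at \<sigma> j + 1 \<longrightarrow> j < i)"
  unfolding M_def max\<sigma> len apply auto using ainj by (metis One_nat_def atLeastAtMost_iff le_refl)

end

locale V = P +
  fixes f :: "nat list"
  assumes pw: "packed_word f" and st: "Std f = \<sigma>"
begin

lemma lenf: "length f = n" and Cf: "C f \<sigma>"
  using Std_props[of f] st len by (auto simp: is_perm_def)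

lemma C1: "i \<in> {1..n} \<Longrightarrow> j \<in> {1..n} \<Longrightarrow> at f i < at f j \<Longrightarrow> at \<sigma> i < at \<sigma> j"
  using Cf lenf unfolding C_def by auto

lemma C2: "i \<in> {1..n} \<Longrightarrow> j \<in> {1..n} \<Longrightarrow> at f i = at f j \<Longrightarrow> i < j \<Longrightarrow> at \<sigma> i < at \<sigma> j"
  using Cf lenf unfolding C_def by auto

lemma mono: "i \<in> {1..n} \<Longrightarrow> j \<in> {1..n} \<Longrightarrow> at \<sigma> i \<le> at \<sigma> j \<Longrightarrow> at f i \<le> at f j"
  using C1[of j i] by fastforce

definition Mx where "Mx = Max (set f)"

lemma setf: "set f = {1..Mx}" using pw by (simp add: packed_word_def Mx_def)

lemma vals: "i \<in> {1..n} \<Longrightarrow> at f i \<in> {1..Mx}"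
  using at_in_set[of i f] lenf setf by simp

lemma hit: "v \<in> {1..Mx} \<Longrightarrow> \<exists>l\<in>{1..n}. at f l = v"
  using set_at[of f] lenf setf by (metis imageE)

lemma step: assumes "i \<in> {1..n}" "j \<in> {1..n}" "at \<sigma> i = at \<sigma> j + 1"
  shows "at f j \<le> at f i \<and> at f i \<le> at f j + 1"
proof
  show "at f j \<le> at f i" using mono assms by simp
  show "at f i \<le> at f j + 1"
  proof (rule ccontr)
    assume a: "\<not> ?thesis"
    have "at f j + 1 \<in> {1..Mx}" using vals[OF assms(1)] a by auto
    then obtain l where l: "l \<in> {1..n}" "at f l = at f j + 1" using hit by blast
    have "at \<sigma> j < at \<sigma> l" using C1[OF assms(2) l(1)] l by simp
    moreover have "at \<sigma> l < at \<sigma> i" using C1[OF l(1) assms(1)] l a by simp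
    ultimately show False using assms(3) by simp
  qed
qed

lemma step_gt: assumes "i \<in> {1..n}" "j \<in> {1..n}" "at \<sigma> i = at \<sigma> j + 1" "i < j"
  shows "at f i = at f j + 1"
proof -
  have "at f i \<noteq> at f j" using C2[OF assms(1,2) _ assms(4)] assms(3) by auto
  thus ?thesis using step[OF assms(1-3)] by simp
qed

lemma step_M: assumes i: "i \<in> {1..n}" and j: "j \<in> {1..n}" and s: "at \<sigma> i = at \<sigma> j + 1" and "j < i"
  shows "j \<in> M f \<longleftrightarrow> at f i = at f j + 1"
proof
  assume jm: "j \<in> M f"
  have "at f i \<noteq> at f j"
  proof
    assume "at f i = at f j"
    hence "i \<le> j" using jm i lenf unfolding M_def by auto
    thus False using \<open>j < i\<close> by simp
  qed
  thus "at f i = at f j + 1" using step[OF i j s] by simp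
next
  assume e: "at f i = at f j + 1"
  have "at f j < Max (set f)" using vals[OF i] e by (simp add: Mx_def)
  moreover have "\<forall>l\<in>{1..n}. at f l = at f j \<longrightarrow> l \<le> j"
  proof (intro ballI impI)
    fix l assume l: "l \<in> {1..n}" "at f l = at f j"
    show "l \<le> j"
    proof (rule ccontr)
      assume "\<not> l \<le> j"
      hence "at \<sigma> j < at \<sigma> l" using C2[OF j l(1)] l by simp
      hence "at \<sigma> i \<le> at \<sigma> l" using s by simp
      hence "at f i \<le> at f l" using mono[OF i l(1)] by blast
      thus False using e l by simp
    qed
  qed
  moreover have "\<forall>l\<in>{1..n}. at f l = at f j + 1 \<longrightarrow> j < l"
  proof (intro ballI impI)
    fix l assume l: "l \<in> {1..n}" "at f l = at f j + 1"
    show "j < l"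
    proof (rule ccontr)
      assume "\<not> j < l"
      moreover have "l \<noteq> j" using l by auto
      ultimately have "l < j" by simp
      hence "l < i" using \<open>j < i\<close> by simp
      hence "at \<sigma> l < at \<sigma> i" using C2[OF l(1) i] l e by simp
      hence "at \<sigma> l \<le> at \<sigma> j" using s by simp
      moreover have "at \<sigma> l \<noteq> at \<sigma> j" using ainj l(1) j \<open>l \<noteq> j\<close> by blast
      ultimately have "at \<sigma> l < at \<sigma> j" by simp
      hence "at f l \<le> at f j" using mono l(1) j by simp
      thus False using l by simp
    qed
  qed
  ultimately show "j \<in> M f" unfolding M_def using j lenf by auto
qed

lemma Msub: "M f \<subseteq> M \<sigma>"
proof
  fix j assume jm: "j \<in> M f"
  have j: "j \<in> {1..n}" using jm lenf unfolding M_def by auto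
  have "at f j < Mx" using jm unfolding M_def Mx_def by auto
  then obtain l where l: "l \<in> {1..n}" "at f l = Mx" using hit[of Mx] vals[OF j] by auto
  have "at \<sigma> j < at \<sigma> l" using C1[OF j l(1)] l \<open>at f j < Mx\<close> by simp
  hence lt: "at \<sigma> j < n" using atr[OF l(1)] by simp
  have "\<forall>i\<in>{1..n}. at \<sigma> i = at \<sigma> j + 1 \<longrightarrow> j < i"
  proof (intro ballI impI)
    fix i assume i: "i \<in> {1..n}" "at \<sigma> i = at \<sigma> j + 1"
    show "j < i"
    proof (rule ccontr)
      assume "\<not> j < i"
      moreover have "i \<noteq> j" using i by auto
      ultimately have "i < j" by simp
      have "at f i \<noteq> at f j" using C2[OF i(1) j _ \<open>i < j\<close>] i(2) by auto
      hence "at f i = at f j + 1" using step[OF i(1) j i(2)] by simp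
      hence "j < i" using jm i(1) unfolding M_def by auto
      thus False using \<open>i < j\<close> by simp
    qed
  qed
  thus "j \<in> M \<sigma>" using M\<sigma> j lt by blast
qed

lemma base: "i \<in> {1..n} \<Longrightarrow> at \<sigma> i = 1 \<Longrightarrow> at f i = 1"
proof -
  assume i: "i \<in> {1..n}" "at \<sigma> i = 1"
  have "1 \<in> {1..Mx}" using vals[OF i(1)] by auto
  then obtain l where l: "l \<in> {1..n}" "at f l = 1" using hit by blast
  have "at f i \<le> at f l" using mono[OF i(1) l(1)] i(2) atr[OF l(1)] by simp
  thus ?thesis using l vals[OF i(1)] by simp
qed

end


definition stp :: "nat \<Rightarrow> nat list \<Rightarrow> nat set \<Rightarrow> nat \<Rightarrow> bool" where
  "stp n \<sigma> J k \<longleftrightarrow> (\<exists>j\<in>{1..n}. at \<sigma> j = k \<and> j \<in> J) \<or>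
     (\<exists>i\<in>{1..n}. \<exists>j\<in>{1..n}. at \<sigma> j = k \<and> at \<sigma> i = k + 1 \<and> i < j)"

primrec hh :: "(nat \<Rightarrow> bool) \<Rightarrow> nat \<Rightarrow> nat" where
  "hh s 0 = 1"
| "hh s (Suc k) = hh s k + (if s (Suc k) then 1 else 0)"

definition mkf :: "nat \<Rightarrow> nat list \<Rightarrow> nat set \<Rightarrow> nat list" where
  "mkf n \<sigma> J = map (\<lambda>i. hh (stp n \<sigma> J) (at \<sigma> i - 1)) [1..<n+1]"

lemma hh_mono: "a \<le> b \<Longrightarrow> hh s a \<le> hh s b"
  by (induction b) (auto simp: le_Suc_eq)

lemma hh_step: "x \<ge> 1 \<Longrightarrow> hh s x = hh s (x - 1) + (if s x then 1 else 0)"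
  by (cases x) auto

lemma hh_ge1: "hh s a \<ge> 1"
  using hh_mono[of 0 a s] by simp

lemma hh_img: "hh s ` {0..m} = {1..hh s m}"
proof (induction m)
  case 0 thus ?case by simp
next
  case (Suc m)
  have "{0..Suc m} = insert (Suc m) {0..m}" by auto
  hence "hh s ` {0..Suc m} = insert (hh s (Suc m)) {1..hh s m}" using Suc by simp
  also have "\<dots> = {1..hh s (Suc m)}" using hh_ge1[of s m] by auto
  finally show ?case .
qed

context P
begin

lemma inj_valid: assumes "V n \<sigma> f" "V n \<sigma> f'" "M f = M f'" shows "f = f'"
proof -
  interpret a: V n \<sigma> f by fact
  interpret b: V n \<sigma> f' by fact
  have main: "\<forall>i\<in>{1..n}. at \<sigma> i = k \<longrightarrow> at f i = at f' i" for k
  proof (induction k)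
    case 0 thus ?case using atr by fastforce
  next
    case (Suc k)
    show ?case
    proof (intro ballI impI)
      fix i assume i: "i \<in> {1..n}" "at \<sigma> i = Suc k"
      show "at f i = at f' i"
      proof (cases "k = 0")
        case True thus ?thesis using a.base b.base i by simp
      next
        case False
        have "k \<in> {1..n}" using atr[OF i(1)] i(2) False by auto
        then obtain j where j: "j \<in> {1..n}" "at \<sigma> j = k" using asurj by blast
        have eq: "at f j = at f' j" using Suc j by blast
        have s: "at \<sigma> i = at \<sigma> j + 1" using i j by simp
        have "i \<noteq> j" using s by auto
        hence "i < j \<or> j < i" by arith
        thus ?thesis
        proof
          assume "i < j" thus ?thesis using a.step_gt[OF i(1) j(1) s] b.step_gt[OF i(1) j(1) s] eq by simp
        next
          assume "j < i"
          thus ?thesis using a.step_M[OF i(1) j(1) s] b.step_M[OF i(1) j(1) s]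
             a.step[OF i(1) j(1) s] b.step[OF i(1) j(1) s] eq assms(3) by auto
        qed
      qed
    qed
  qed
  show ?thesis
  proof (rule nth_equalityI)
    show "length f = length f'" using a.lenf b.lenf by simp
    fix k assume "k < length f"
    hence "Suc k \<in> {1..n}" using a.lenf by simp
    hence "at f (Suc k) = at f' (Suc k)" using main[of "at \<sigma> (Suc k)"] by blast
    thus "f ! k = f' ! k" by (simp add: at_def)
  qed
qed

lemma surj_valid: assumes J: "J \<subseteq> M \<sigma>" shows "\<exists>f. V n \<sigma> f \<and> M f = J"
proof -
  define s where "s = stp n \<sigma> J"
  define g where "g = mkf n \<sigma> J"
  have leng: "length g = n" by (simp add: g_def mkf_def)
  have atg: "at g i = hh s (at \<sigma> i - 1)" if "i \<in> {1..n}" for i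
    using that by (auto simp: g_def mkf_def s_def at_def nth_upt simp del: upt_Suc)
  have "set g = at g ` {1..n}" using set_at[of g] leng by simp
  also have "\<dots> = (\<lambda>i. hh s (at \<sigma> i - 1)) ` {1..n}" using atg by (intro image_cong) auto
  also have "\<dots> = hh s ` ((\<lambda>v. v - 1) ` (at \<sigma> ` {1..n}))" by (simp add: image_image)
  also have "(\<lambda>v. v - 1) ` (at \<sigma> ` {1..n}) = {0..n-1}"
  proof -
    have "(\<lambda>v. v - 1) ` {1..n} = {0..n-1}"
    proof
      show "{0..n - 1} \<subseteq> (\<lambda>v. v - 1) ` {1..n}"
      proof
        fix x assume "x \<in> {0..n-1}"
        hence "Suc x \<in> {1..n}" "x = Suc x - 1" using n1 by auto
        thus "x \<in> (\<lambda>v. v - 1) ` {1..n}" by blast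
      qed
    qed auto
    thus ?thesis using im\<sigma> by simp
  qed
  also have "hh s ` {0..n-1} = {1..hh s (n-1)}" by (rule hh_img)
  finally have setg: "set g = {1..hh s (n-1)}" .
  have pwg: "packed_word g"
  proof -
    have "Max (set g) = hh s (n-1)" unfolding setg using hh_ge1[of s] by (intro Max_eqI) auto
    moreover have "g \<noteq> []" using leng n1 by auto
    ultimately show ?thesis using setg by (simp add: packed_word_def)
  qed
  have chain: "\<forall>i\<in>{1..n}. \<forall>j\<in>{1..n}. at \<sigma> i = at \<sigma> j + d \<longrightarrow>
       hh s (at \<sigma> i - 1) = hh s (at \<sigma> j - 1) \<longrightarrow> j \<le> i" for d
  proof (induction d)
    case 0 thus ?case using ainj by (metis add_0_right order.refl)
  next
    case (Suc d)
    show ?case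
    proof (intro ballI impI)
      fix i j assume i: "i \<in> {1..n}" and j: "j \<in> {1..n}" and d: "at \<sigma> i = at \<sigma> j + Suc d"
        and h: "hh s (at \<sigma> i - 1) = hh s (at \<sigma> j - 1)"
      have "at \<sigma> j + d \<in> {1..n}" using atr[OF i] atr[OF j] d by auto
      then obtain l where l: "l \<in> {1..n}" "at \<sigma> l = at \<sigma> j + d" using asurj by blast
      have "hh s (at \<sigma> j - 1) \<le> hh s (at \<sigma> l - 1)" using l by (intro hh_mono) simp
      moreover have "hh s (at \<sigma> l - 1) \<le> hh s (at \<sigma> i - 1)" using l d by (intro hh_mono) simp
      ultimately have h1: "hh s (at \<sigma> l - 1) = hh s (at \<sigma> j - 1)" using h by simp
      have jl: "j \<le> l" using Suc.IH l(1) j l(2) h1 by blast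
      have al: "at \<sigma> l \<ge> 1" using atr[OF l(1)] by simp
      have "at \<sigma> i - 1 = at \<sigma> l" using d l(2) al by simp
      hence "hh s (at \<sigma> i - 1) = hh s (at \<sigma> l - 1) + (if s (at \<sigma> l) then 1 else 0)"
        using hh_step[OF al, of s] by simp
      hence ns: "\<not> s (at \<sigma> l)" using h h1 by (simp split: if_splits)
      have "l \<le> i"
      proof (rule ccontr)
        assume "\<not> l \<le> i"
        hence il: "i < l" by simp
        have ai: "at \<sigma> i = at \<sigma> l + 1" using d l(2) by simp
        have "\<exists>i'\<in>{1..n}. \<exists>j'\<in>{1..n}. at \<sigma> j' = at \<sigma> l \<and> at \<sigma> i' = at \<sigma> l + 1 \<and> i' < j'"
          using i l(1) il ai by blast
        hence "s (at \<sigma> l)" unfolding s_def stp_def by blast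
        thus False using ns by simp
      qed
      thus "j \<le> i" using jl by simp
    qed
  qed
  have Cg: "C g \<sigma>" unfolding C_def leng
  proof (intro ballI conjI impI)
    fix i j assume i: "i \<in> {1..n}" and j: "j \<in> {1..n}"
    { assume lt: "at g i < at g j"
      show "at \<sigma> i < at \<sigma> j"
      proof (rule ccontr)
        assume "\<not> ?thesis"
        hence "hh s (at \<sigma> j - 1) \<le> hh s (at \<sigma> i - 1)" by (intro hh_mono) simp
        thus False using lt atg[OF i] atg[OF j] by simp
      qed }
    { assume e: "at g i = at g j \<and> i < j"
      show "at \<sigma> i < at \<sigma> j"
      proof (rule ccontr)
        assume "\<not> ?thesis"
        moreover have "at \<sigma> i \<noteq> at \<sigma> j"
        proof
          assume "at \<sigma> i = at \<sigma> j"
          hence "i = j" using ainj i j by blast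
          thus False using e by simp
        qed
        ultimately have "at \<sigma> j < at \<sigma> i" by simp
        define d where "d = at \<sigma> i - at \<sigma> j"
        have d: "at \<sigma> i = at \<sigma> j + d" using \<open>at \<sigma> j < at \<sigma> i\<close> by (simp add: d_def)
        have "hh s (at \<sigma> i - 1) = hh s (at \<sigma> j - 1)" using e atg[OF i] atg[OF j] by simp
        hence "j \<le> i" using chain[of d] i j d by blast
        thus False using e by simp
      qed }
  qed
  have "Std g = \<sigma>"
    using std_unique[of g "Std g" \<sigma>] Std_props[of g] Cg perm leng by simp
  then interpret gv: V n \<sigma> g using pwg by unfold_locales
  have "M g = J"
  proof
    show "M g \<subseteq> J"
    proof
      fix j assume jm: "j \<in> M g"
      hence jM: "j \<in> M \<sigma>" using gv.Msub by blast
      hence j: "j \<in> {1..n}" "at \<sigma> j < n" and aft: "\<forall>i\<in>{1..n}. at \<sigma> i = at \<sigma> j + 1 \<longrightarrow> j < i"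
        using M\<sigma>[of j] by blast+
      have "at \<sigma> j + 1 \<in> {1..n}" using j by simp
      then obtain i where i: "i \<in> {1..n}" "at \<sigma> i = at \<sigma> j + 1" using asurj by blast
      have ji: "j < i" using aft i by blast
      have e: "at g i = at g j + 1" using gv.step_M[OF i(1) j(1) i(2) ji] jm by blast
      have aj: "at \<sigma> j \<ge> 1" using atr[OF j(1)] by simp
      have gi: "at g i = hh s (at \<sigma> j)" using atg[OF i(1)] i(2) by simp
      have gj: "at g j = hh s (at \<sigma> j - 1)" using atg[OF j(1)] .
      have "hh s (at \<sigma> j) = hh s (at \<sigma> j - 1) + 1" using e gi gj by linarith
      hence "s (at \<sigma> j)" using hh_step[OF aj, of s] by (cases "s (at \<sigma> j)") simp_all
      thus "j \<in> J" unfolding s_def stp_def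
      proof
        assume "\<exists>j'\<in>{1..n}. at \<sigma> j' = at \<sigma> j \<and> j' \<in> J"
        then obtain j' where "j' \<in> {1..n}" "at \<sigma> j' = at \<sigma> j" "j' \<in> J" by blast
        moreover have "j' = j" using ainj[of j' j] calculation j(1) by simp
        ultimately show "j \<in> J" by simp
      next
        assume "\<exists>i'\<in>{1..n}. \<exists>j'\<in>{1..n}. at \<sigma> j' = at \<sigma> j \<and> at \<sigma> i' = at \<sigma> j + 1 \<and> i' < j'"
        then obtain i' j' where "i' \<in> {1..n}" "j' \<in> {1..n}" "at \<sigma> j' = at \<sigma> j"
          "at \<sigma> i' = at \<sigma> j + 1" "i' < j'" by blast
        note h = this
        have "j' = j" by (rule ainj) (use h j(1) in auto)
        moreover have "i' = i" by (rule ainj) (use h i in auto)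
        ultimately show "j \<in> J" using h(5) ji by simp
      qed
    qed
    show "J \<subseteq> M g"
    proof
      fix j assume jJ: "j \<in> J"
      hence "j \<in> M \<sigma>" using J by blast
      hence j: "j \<in> {1..n}" "at \<sigma> j < n" and aft: "\<forall>i\<in>{1..n}. at \<sigma> i = at \<sigma> j + 1 \<longrightarrow> j < i"
        using M\<sigma>[of j] by blast+
      have "at \<sigma> j + 1 \<in> {1..n}" using j by simp
      then obtain i where i: "i \<in> {1..n}" "at \<sigma> i = at \<sigma> j + 1" using asurj by blast
      have ji: "j < i" using aft i by blast
      have "s (at \<sigma> j)" unfolding s_def stp_def using j jJ by blast
      moreover have aj: "at \<sigma> j \<ge> 1" using atr[OF j(1)] by simp
      have gi: "at g i = hh s (at \<sigma> j)" using atg[OF i(1)] i(2) by simp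
      have gj: "at g j = hh s (at \<sigma> j - 1)" using atg[OF j(1)] .
      have "hh s (at \<sigma> j) = hh s (at \<sigma> j - 1) + 1" using hh_step[OF aj, of s] calculation by simp
      hence "at g i = at g j + 1" using gi gj by linarith
      thus "j \<in> M g" using gv.step_M[OF i(1) j(1) i(2) ji] by simp
    qed
  qed
  thus ?thesis using gv.V_axioms by blast
qed

end


theorem lemma25:
  fixes n :: nat and \<sigma> :: "nat list"
  assumes "n \<ge> 1" and "is_perm n \<sigma>"
  shows "(\<forall>f. packed_word f \<and> Std f = \<sigma> \<longrightarrow> M f \<subseteq> M \<sigma>)
         \<and> bij_betw M {f. packed_word f \<and> Std f = \<sigma>} {I. I \<subseteq> M \<sigma>}"
proof -
  interpret P n \<sigma> using assms by unfold_locales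
  have Vi: "V n \<sigma> f \<longleftrightarrow> packed_word f \<and> Std f = \<sigma>" for f
    using assms unfolding V_def V_axioms_def P_def by auto
  have sub: "\<forall>f. packed_word f \<and> Std f = \<sigma> \<longrightarrow> M f \<subseteq> M \<sigma>"
    using V.Msub Vi by blast
  have "inj_on M {f. packed_word f \<and> Std f = \<sigma>}"
    using inj_valid Vi by (auto simp: inj_on_def)
  moreover have "M ` {f. packed_word f \<and> Std f = \<sigma>} = {I. I \<subseteq> M \<sigma>}"
  proof
    show "M ` {f. packed_word f \<and> Std f = \<sigma>} \<subseteq> {I. I \<subseteq> M \<sigma>}" using sub by blast
    show "{I. I \<subseteq> M \<sigma>} \<subseteq> M ` {f. packed_word f \<and> Std f = \<sigma>}"
    proof
      fix I assume "I \<in> {I. I \<subseteq> M \<sigma>}"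
      then obtain f where "V n \<sigma> f" "M f = I" using surj_valid by blast
      thus "I \<in> M ` {f. packed_word f \<and> Std f = \<sigma>}" using Vi by blast
    qed
  qed
  ultimately show ?thesis using sub by (simp add: bij_betw_def)
qed

end
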